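(* Let $\Sigma$ be a finite totally ordered alphabet. For all $x\in\Sigma^n$, $$|\mathcal{C}_x|=\sum_{y\in G_{x,\leq n}}\frac{1}{|\mathsf{Orbit}(y)|}=\sum_{y\in G_{x,\leq n}}\frac{1}{\mathsf{FP}(y)}.$$
   Context: For $y\in\Sigma^n$, $\mathsf{Orbit}(y)$ is the set consisting of $y$ and all its distinct cyclic rotations. $\mathsf{FP}(y)$ is the fundamental period of $y$: the least $p$ such that $y=y_1^{n/p}$ for some $y_1\in\Sigma^p$. For an orbit $E$ and $x\in\Sigma^n$, $E<x$ means $E$ contains a string lexicographically less than $x$; $\mathcal{C}_x$ is the set of orbits $E$ with $E<x$; and $G_{x,\leq p}=\bigcup_{E\in\mathcal{C}_x,\ |E|\text{ divides }p}E$. *)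

theory Defs
  imports Complex_Main
begin

definition strings :: "nat \<Rightarrow> 'a list set" where
  "strings n = {y. length y = n}"

definition Orbit :: "'a list \<Rightarrow> 'a list set" where
  "Orbit y = range (\<lambda>k. rotate k y)"

definition FP :: "'a list \<Rightarrow> nat" where
  "FP y = (LEAST p. p > 0 \<and> p dvd length y \<and>
     (\<exists>y1. length y1 = p \<and> y = concat (replicate (length y div p) y1)))"

definition lex_less :: "'a::linorder list \<Rightarrow> 'a list \<Rightarrow> bool" where
  "lex_less u v \<longleftrightarrow> (u, v) \<in> lexord {(a, b). a < b}"

definition orbits :: "nat \<Rightarrow> 'a list set set" where
  "orbits n = Orbit ` strings n"

definition C_set :: "'a::linorder list \<Rightarrow> 'a list set set" where
  "C_set x = {E \<in> orbits (length x). \<exists>z\<in>E. lex_less z x}"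

definition G_set :: "'a::linorder list \<Rightarrow> nat \<Rightarrow> 'a list set" where
  "G_set x p = \<Union>{E \<in> C_set x. card E dvd p}"

end

theory Submission imports Defs begin

lemma rot_mult: "rotate p y = y \<Longrightarrow> rotate (m*p) y = y"
  by (induction m) (auto simp: rotate_rotate[symmetric] add.commute)

lemma rot_mod: "rotate p y = y \<Longrightarrow> rotate k y = rotate (k mod p) y"
proof -
  assume h: "rotate p y = y"
  have "rotate k y = rotate (k mod p) (rotate (k div p * p) y)"
    by (metis rotate_rotate mod_div_mult_eq)
  thus ?thesis using rot_mult[OF h] by simp
qed

lemma concat_rep_nth: "i < k * length z \<Longrightarrow> concat (replicate k z) ! i = z ! (i mod length z)"
proof (induction k arbitrary: i)
  case 0 then show ?case by simp
next
  case (Suc k)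
  show ?case
  proof (cases "i < length z")
    case True then show ?thesis by (simp add: nth_append)
  next
    case False
    then have "i - length z < k * length z" using Suc.prems by auto
    then show ?thesis using False Suc.IH
      by (simp add: nth_append mod_if)
  qed
qed

lemma rot_concat: "length y1 = q \<Longrightarrow> 0 < k \<Longrightarrow> rotate q (concat (replicate k y1)) = concat (replicate k y1)"
proof -
  assume a: "length y1 = q" "0 < k"
  then obtain j where k: "k = Suc j" by (cases k) auto
  have "concat (replicate k y1) = y1 @ concat (replicate j y1)" using k by simp
  hence "rotate q (concat (replicate k y1)) = concat (replicate j y1) @ y1"
    using a rotate_append by metis
  also have "\<dots> = concat (replicate j y1 @ [y1])" by simp
  also have "\<dots> = concat (replicate k y1)" using k by (simp add: replicate_append_same)
  finally show ?thesis .
qed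

lemma per_nth:
  assumes h: "rotate p y = y" and p: "0 < p" "p dvd length y"
  shows "i < length y \<Longrightarrow> y ! i = y ! (i mod p)"
proof (induction i rule: less_induct)
  case (less i)
  show ?case
  proof (cases "i < p")
    case True then show ?thesis by simp
  next
    case False
    have "y ! (i - p) = rotate p y ! (i - p)" using h by simp
    also have "\<dots> = y ! i" using False less.prems by (simp add: nth_rotate)
    finally have "y ! i = y ! (i - p)" by simp
    also have "\<dots> = y ! ((i - p) mod p)" using less.IH[of "i-p"] less.prems False p by auto
    also have "\<dots> = y ! (i mod p)" using False by (simp add: mod_if[of i p])
    finally show ?thesis .
  qed
qed

lemma per_concat:
  assumes h: "rotate p y = y" and p: "0 < p" "p dvd length y"
  shows "y = concat (replicate (length y div p) (take p y))"
proof (rule nth_equalityI)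
  show "length y = length (concat (replicate (length y div p) (take p y)))"
  proof (cases "length y = 0")
    case False
    hence "p \<le> length y" using p by (simp add: dvd_imp_le)
    thus ?thesis using p by (simp add: length_concat sum_list_replicate min_def)
  qed simp
  fix i assume i: "i < length y"
  have lp: "p \<le> length y" using p i by (metis dvd_imp_le gr_zeroI not_less0)
  have "concat (replicate (length y div p) (take p y)) ! i = take p y ! (i mod p)"
    using concat_rep_nth[of i "length y div p" "take p y"] lp p i by simp
  also have "\<dots> = y ! (i mod p)" using p by simp
  finally show "y ! i = concat (replicate (length y div p) (take p y)) ! i"
    using per_nth[OF assms i] by simp
qed

definition per :: "'a list \<Rightarrow> nat" where
  "per y = (LEAST p. 0 < p \<and> rotate p y = y)"

lemma per_props:
  assumes "y \<noteq> []"
  shows "0 < per y" "rotate (per y) y = y" "per y \<le> length y"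
    "\<And>q. 0 < q \<Longrightarrow> rotate q y = y \<Longrightarrow> per y \<le> q"
proof -
  have ex: "0 < length y \<and> rotate (length y) y = y" using assms by simp
  show "0 < per y" "rotate (per y) y = y"
    unfolding per_def using LeastI[of "\<lambda>p. 0 < p \<and> rotate p y = y", OF ex] by auto
  show "per y \<le> length y" unfolding per_def by (rule Least_le) (rule ex)
  show "\<And>q. 0 < q \<Longrightarrow> rotate q y = y \<Longrightarrow> per y \<le> q"
    unfolding per_def by (rule Least_le) simp
qed

lemma per_dvd_rot:
  assumes "y \<noteq> []" "0 < k" "rotate k y = y"
  shows "per y dvd k"
proof (rule ccontr)
  assume nd: "\<not> per y dvd k"
  have "rotate (k mod per y) y = y" using rot_mod[OF per_props(2)[OF assms(1)]] assms by metis
  moreover have "0 < k mod per y" using nd mod_greater_zero_iff_not_dvd by blast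
  ultimately have "per y \<le> k mod per y" using per_props(4)[OF assms(1)] by blast
  moreover have "k mod per y < per y" using per_props(1)[OF assms(1)] by simp
  ultimately show False by simp
qed

lemma per_dvd_len: "y \<noteq> [] \<Longrightarrow> per y dvd length y"
  using per_dvd_rot[of y "length y"] by simp

lemma orbit_img: assumes "y \<noteq> []"
  shows "Orbit y = (\<lambda>k. rotate k y) ` {..<per y}"
proof
  show "Orbit y \<subseteq> (\<lambda>k. rotate k y) ` {..<per y}"
  proof
    fix z assume "z \<in> Orbit y"
    then obtain k where z: "z = rotate k y" by (auto simp: Orbit_def)
    hence "z = rotate (k mod per y) y" using rot_mod[OF per_props(2)[OF assms]] by metis
    moreover have "k mod per y < per y" using per_props(1)[OF assms] by simp
    ultimately show "z \<in> (\<lambda>k. rotate k y) ` {..<per y}" by blast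
  qed
qed (auto simp: Orbit_def)

lemma orbit_inj: assumes "y \<noteq> []"
  shows "inj_on (\<lambda>k. rotate k y) {..<per y}"
proof (rule linorder_inj_onI', rule notI)
  fix i j assume ij: "i < j" "j \<in> {..<per y}" and eq: "rotate i y = rotate j y"
  have "rotate (per y - j) (rotate j y) = y"
    using ij per_props(2)[OF assms] by (simp add: rotate_rotate)
  hence "rotate (per y - j) (rotate i y) = y" using eq by simp
  hence "rotate (per y - j + i) y = y" by (simp add: rotate_rotate)
  hence "per y \<le> per y - j + i" using per_props(4)[OF assms] ij by auto
  thus False using ij by auto
qed

lemma card_orbit: "y \<noteq> [] \<Longrightarrow> card (Orbit y) = per y"
  using orbit_img orbit_inj card_image by fastforce

lemma fin_orbit: "finite (Orbit y)"
proof (cases "y = []")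
  case False thus ?thesis using orbit_img[OF False] by simp
qed (simp add: Orbit_def)

lemma FP_per: assumes "y \<noteq> []" shows "FP y = per y"
  unfolding FP_def
proof (rule Least_equality)
  show "0 < per y \<and> per y dvd length y \<and>
     (\<exists>y1. length y1 = per y \<and> y = concat (replicate (length y div per y) y1))"
    using per_props[OF assms] per_dvd_len[OF assms] per_concat[of "per y" y]
    by (intro conjI exI[of _ "take (per y) y"]) auto
  fix q assume q: "0 < q \<and> q dvd length y \<and>
     (\<exists>y1. length y1 = q \<and> y = concat (replicate (length y div q) y1))"
  then obtain y1 where y1: "length y1 = q" "y = concat (replicate (length y div q) y1)" by blast
  have "0 < length y div q" using q assms
    by (metis dvd_div_eq_0_iff length_0_conv neq0_conv)
  hence "rotate q y = y" using rot_concat[OF y1(1)] y1(2) by metis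
  thus "per y \<le> q" using per_props(4)[OF assms] q by blast
qed

lemma card_orbit_FP: "card (Orbit y) = FP y"
proof (cases "y = []")
  case True
  have "FP y = 1" unfolding FP_def True
    by (rule Least_equality) (auto intro: exI[of _ "[undefined]"])
  thus ?thesis using True by (simp add: Orbit_def)
qed (simp add: card_orbit FP_per)

lemma card_orbit_dvd: "card (Orbit y) dvd length y"
  by (cases "y = []") (simp_all add: card_orbit per_dvd_len)

lemma orbit_rot: "Orbit (rotate k y) = Orbit y"
proof
  show "Orbit (rotate k y) \<subseteq> Orbit y" by (auto simp: Orbit_def rotate_rotate)
  show "Orbit y \<subseteq> Orbit (rotate k y)"
  proof
    fix z assume "z \<in> Orbit y"
    then obtain j where z: "z = rotate j y" by (auto simp: Orbit_def)
    show "z \<in> Orbit (rotate k y)"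
    proof (cases "y = []")
      case True thus ?thesis using z by (simp add: Orbit_def)
    next
      case False
      have "rotate (j + k * (length y - 1)) (rotate k y) = rotate (j + k * length y) y"
        using False by (simp add: rotate_rotate algebra_simps) (cases "length y"; simp add: algebra_simps)
      also have "\<dots> = rotate j y" by (metis rotate_conv_mod mod_mult_self1)
      finally show ?thesis unfolding Orbit_def z by (metis rangeI)
    qed
  qed
qed

lemma orbit_mem: "z \<in> Orbit y \<Longrightarrow> Orbit z = Orbit y"
  unfolding Orbit_def by (metis Orbit_def orbit_rot rangeE)

theorem lemma2:
  fixes x :: "'a::{finite, linorder} list" and n :: nat
  assumes "x \<in> strings n"
  shows "real (card (C_set x)) = (\<Sum>y\<in>G_set x n. 1 / real (card (Orbit y)))
       \<and> (\<Sum>y\<in>G_set x n. 1 / real (card (Orbit y))) = (\<Sum>y\<in>G_set x n. 1 / real (FP y))"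
proof
  have lx: "length x = n" using assms by (simp add: strings_def)
  have Cor: "\<And>E. E \<in> C_set x \<Longrightarrow> \<exists>y. length y = n \<and> E = Orbit y"
    using lx by (auto simp: C_set_def orbits_def strings_def)
  have G: "G_set x n = \<Union>(C_set x)"
    unfolding G_set_def using Cor card_orbit_dvd by fastforce
  have finS: "finite (strings n :: 'a list set)"
  proof -
    have "strings n = {xs :: 'a list. set xs \<subseteq> UNIV \<and> length xs = n}" by (auto simp: strings_def)
    thus ?thesis using finite_lists_length_eq[of "UNIV :: 'a set" n] by simp
  qed
  have finC: "finite (C_set x)"
    by (rule finite_subset[of _ "orbits n"]) (auto simp: C_set_def orbits_def lx finS)
  have disj: "pairwise disjnt (C_set x)"
  proof (rule pairwiseI)
    fix E F assume "E \<in> C_set x" "F \<in> C_set x" "E \<noteq> F"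
    then obtain y1 y2 where "E = Orbit y1" "F = Orbit y2" using Cor by blast
    then show "disjnt E F" using \<open>E \<noteq> F\<close> orbit_mem unfolding disjnt_def by blast
  qed
  have one: "(\<Sum>y\<in>E. 1 / real (card (Orbit y))) = 1" if EC: "E \<in> C_set x" for E
  proof -
    obtain y where y: "E = Orbit y" using Cor[OF EC] by blast
    have "(\<Sum>z\<in>E. 1 / real (card (Orbit z))) = (\<Sum>z\<in>E. 1 / real (card E))"
    proof (rule sum.cong[OF refl])
      fix z assume "z \<in> E"
      have "Orbit z = E" using y orbit_mem[of z y] \<open>z \<in> E\<close> by metis
      thus "1 / real (card (Orbit z)) = 1 / real (card E)" by (rule arg_cong)
    qed
    also have "\<dots> = 1"
    proof -
      have "y \<in> E" unfolding y Orbit_def using rangeI[of "\<lambda>k. rotate k y" 0] by simp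
      hence "card E > 0" using y fin_orbit[of y] card_gt_0_iff by auto
      thus ?thesis by simp
    qed
    finally show ?thesis .
  qed
  have "(\<Sum>y\<in>G_set x n. 1 / real (card (Orbit y))) = (\<Sum>E\<in>C_set x. \<Sum>y\<in>E. 1 / real (card (Orbit y)))"
  proof -
    have a1: "\<forall>A\<in>C_set x. finite A" using Cor fin_orbit by blast
    have a2: "\<forall>A\<in>C_set x. \<forall>B\<in>C_set x. A \<noteq> B \<longrightarrow> A \<inter> B = {}"
      using disj unfolding pairwise_def disjnt_def by blast
    show ?thesis unfolding G using sum.Union_disjoint[OF a1 a2] by (simp add: o_def)
  qed
  also have "\<dots> = real (card (C_set x))" using one by simp
  finally show "real (card (C_set x)) = (\<Sum>y\<in>G_set x n. 1 / real (card (Orbit y)))" by simp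
  show "(\<Sum>y\<in>G_set x n. 1 / real (card (Orbit y))) = (\<Sum>y\<in>G_set x n. 1 / real (FP y))"
    by (simp add: card_orbit_FP)
qed

end
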